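(* There is an absolute constant $C>0$ such that for every undirected graph $G=(V,E,\omega)$ on $n$ vertices with positive edge weights and every integer $k\ge 1$, there exists a weighted edge set $H$ on $V$ with at most $C\,k\, n^{1+1/(2^k-1)}$ edges which, for every $0<\epsilon<1$ simultaneously, is a $(\beta,\epsilon)$-hopset of $G$ with $\beta=\left(Ck/\epsilon\right)^{k-1}$.
   Context: For a weighted graph $F$ and positive integer $\beta$, $d^{(\beta)}_F(u,v)$ denotes the minimum length of a $u$–$v$ path in $F$ with at most $\beta$ edges. A weighted edge set $H$ on $V$ (weights $\omega_H(u,v)\ge d_G(u,v)$) is a $(\beta,\epsilon)$-hopset of $G$ if for all $u,v\in V$, $d_G(u,v)\le d^{(\beta)}_{G\cup H}(u,v)\le(1+\epsilon)d_G(u,v)$, where $G\cup H$ has edge set $E\cup H$. *)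

theory Defs
  imports Complex_Main "HOL-Library.Extended_Real"
begin

text \<open>Undirected weighted graphs: an edge set is a set of 2-element vertex sets,
  weights are a function on edges.\<close>

definition edges_on :: "'a set \<Rightarrow> 'a set set" where
  "edges_on V = {{u, v} | u v. u \<in> V \<and> v \<in> V \<and> u \<noteq> v}"

definition is_walk :: "'a set set \<Rightarrow> 'a \<Rightarrow> 'a \<Rightarrow> 'a list \<Rightarrow> bool" where
  "is_walk F u v xs \<longleftrightarrow> xs \<noteq> [] \<and> hd xs = u \<and> last xs = v \<and>
     (\<forall>i. Suc i < length xs \<longrightarrow> {xs ! i, xs ! Suc i} \<in> F)"

definition walk_len :: "('a set \<Rightarrow> real) \<Rightarrow> 'a list \<Rightarrow> real" where
  "walk_len w xs = (\<Sum>i<length xs - 1. w {xs ! i, xs ! Suc i})"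

definition walk_hops :: "'a list \<Rightarrow> nat" where
  "walk_hops xs = length xs - 1"

text \<open>Shortest-path distance (infinite if no path).\<close>
definition graph_dist :: "'a set set \<Rightarrow> ('a set \<Rightarrow> real) \<Rightarrow> 'a \<Rightarrow> 'a \<Rightarrow> ereal" where
  "graph_dist F w u v = Inf {ereal (walk_len w xs) | xs. is_walk F u v xs}"

definition hop_dist :: "'a set set \<Rightarrow> ('a set \<Rightarrow> real) \<Rightarrow> real \<Rightarrow> 'a \<Rightarrow> 'a \<Rightarrow> ereal" where
  "hop_dist F w \<beta> u v =
     Inf {ereal (walk_len w xs) | xs. is_walk F u v xs \<and> real (walk_hops xs) \<le> \<beta>}"

definition union_weight ::
  "'a set set \<Rightarrow> ('a set \<Rightarrow> real) \<Rightarrow> 'a set set \<Rightarrow> ('a set \<Rightarrow> real) \<Rightarrow> 'a set \<Rightarrow> real" where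
  "union_weight E w H wH e =
     (if e \<in> E \<and> e \<in> H then min (w e) (wH e) else if e \<in> E then w e else wH e)"

definition is_hopset ::
  "'a set \<Rightarrow> 'a set set \<Rightarrow> ('a set \<Rightarrow> real) \<Rightarrow> 'a set set \<Rightarrow> ('a set \<Rightarrow> real)
     \<Rightarrow> real \<Rightarrow> real \<Rightarrow> bool" where
  "is_hopset V E w H wH \<beta> \<epsilon> \<longleftrightarrow>
     H \<subseteq> edges_on V \<and>
     (\<forall>u v. {u, v} \<in> H \<longrightarrow> graph_dist E w u v \<le> ereal (wH {u, v})) \<and>
     (\<forall>u\<in>V. \<forall>v\<in>V.
        graph_dist E w u v \<le> hop_dist (E \<union> H) (union_weight E w H wH) \<beta> u v \<and>
        hop_dist (E \<union> H) (union_weight E w H wH) \<beta> u v \<le> ereal (1 + \<epsilon>) * graph_dist E w u v)"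

end

theory Submission
  imports Defs
begin


lemma is_walk_single[simp]: "is_walk F u v [x] \<longleftrightarrow> u = x \<and> v = x"
  by (auto simp: is_walk_def)

lemma is_walk_Nil[simp]: "\<not> is_walk F u v []"
  by (auto simp: is_walk_def)

lemma is_walk_Cons2: "is_walk F u v (x # y # zs) \<longleftrightarrow> u = x \<and> {x,y} \<in> F \<and> is_walk F y v (y # zs)"
proof
  assume h: "is_walk F u v (x # y # zs)"
  have "{x,y} \<in> F" using h unfolding is_walk_def by (metis One_nat_def length_Cons
        less_Suc_eq_0_disj nth_Cons_0 nth_Cons_Suc zero_less_Suc)
  moreover have "\<forall>i. Suc i < length (y#zs) \<longrightarrow> {(y#zs) ! i, (y#zs) ! Suc i} \<in> F"
  proof (intro allI impI)
    fix i assume "Suc i < length (y#zs)"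
    then have "Suc (Suc i) < length (x#y#zs)" by simp
    then show "{(y#zs) ! i, (y#zs) ! Suc i} \<in> F" using h unfolding is_walk_def
      by (metis nth_Cons_Suc)
  qed
  ultimately show "u = x \<and> {x,y} \<in> F \<and> is_walk F y v (y # zs)" using h
    by (auto simp: is_walk_def)
next
  assume h: "u = x \<and> {x,y} \<in> F \<and> is_walk F y v (y # zs)"
  have "\<forall>i. Suc i < length (x#y#zs) \<longrightarrow> {(x#y#zs) ! i, (x#y#zs) ! Suc i} \<in> F"
  proof (intro allI impI)
    fix i assume "Suc i < length (x#y#zs)"
    then show "{(x#y#zs) ! i, (x#y#zs) ! Suc i} \<in> F" using h unfolding is_walk_def
      by (cases i) auto
  qed
  then show "is_walk F u v (x # y # zs)" using h by (auto simp: is_walk_def)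
qed

lemma walk_len_Nil[simp]: "walk_len w [] = 0" by (simp add: walk_len_def)
lemma walk_len_single[simp]: "walk_len w [x] = 0" by (simp add: walk_len_def)
lemma walk_len_Cons2[simp]: "walk_len w (x # y # zs) = w {x,y} + walk_len w (y # zs)"
  unfolding walk_len_def by (simp add: sum.lessThan_Suc_shift del: sum.lessThan_Suc)

lemma walk_hops_Cons2[simp]: "walk_hops (x # y # zs) = Suc (walk_hops (y # zs))"
  by (simp add: walk_hops_def)
lemma walk_hops_single[simp]: "walk_hops [x] = 0" by (simp add: walk_hops_def)

lemma walk_len_append:
  "xs \<noteq> [] \<Longrightarrow> ys \<noteq> [] \<Longrightarrow>
   walk_len w (xs @ ys) = walk_len w xs + w {last xs, hd ys} + walk_len w ys"
proof (induction xs rule: induct_list012)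
  case (2 x) then show ?case by (cases ys) auto
next
  case (3 x y zs) then show ?case by simp
qed simp

lemma is_walk_append:
  "xs \<noteq> [] \<Longrightarrow> ys \<noteq> [] \<Longrightarrow>
   is_walk F u v (xs @ ys) \<longleftrightarrow> is_walk F u (last xs) xs \<and> {last xs, hd ys} \<in> F \<and> is_walk F (hd ys) v ys"
proof (induction xs arbitrary: u rule: induct_list012)
  case (2 x) then show ?case by (cases ys) (simp_all add: is_walk_Cons2)
next
  case (3 x y zs) then show ?case by (simp add: is_walk_Cons2)
qed simp

lemma walk_hops_append: "xs \<noteq> [] \<Longrightarrow> ys \<noteq> [] \<Longrightarrow>
   walk_hops (xs @ ys) = walk_hops xs + walk_hops ys + 1"
  by (cases xs; cases ys) (simp_all add: walk_hops_def)

lemma is_walk_ends: "is_walk F u v xs \<Longrightarrow> xs \<noteq> [] \<and> hd xs = u \<and> last xs = v"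
  by (simp add: is_walk_def)

lemma walk_rev:
  "is_walk F x y P \<Longrightarrow> is_walk F y x (rev P) \<and> walk_len w (rev P) = walk_len w P
     \<and> walk_hops (rev P) = walk_hops P"
proof (induction P arbitrary: x rule: induct_list012)
  case (3 a b zs)
  then have ih: "is_walk F y b (rev (b # zs)) \<and> walk_len w (rev (b # zs)) = walk_len w (b # zs)
     \<and> walk_hops (rev (b # zs)) = walk_hops (b # zs)" and ab: "{a,b} \<in> F" "x = a"
    by (auto simp: is_walk_Cons2)
  have l: "last (rev (b # zs)) = b" by simp
  have "rev (a # b # zs) = rev (b # zs) @ [a]" by simp
  moreover have "is_walk F y x (rev (b # zs) @ [a])"
    using ih ab by (subst is_walk_append) (auto simp: insert_commute)
  moreover have "walk_len w (rev (b # zs) @ [a]) = walk_len w (a # b # zs)"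
    using ih by (subst walk_len_append) (auto simp: insert_commute)
  moreover have "walk_hops (rev (b # zs) @ [a]) = walk_hops (a # b # zs)"
    using ih by (subst walk_hops_append) (auto simp: walk_hops_def)
  ultimately show ?case by simp
qed auto

lemma walk_split:
  assumes "is_walk F x y (P @ b # Q)"
  shows "is_walk F x b (P @ [b]) \<and> is_walk F b y (b # Q) \<and>
         walk_len w (P @ b # Q) = walk_len w (P @ [b]) + walk_len w (b # Q)"
proof (cases "P = []")
  case True then show ?thesis using assms by (auto simp: is_walk_def)
next
  case False
  have "P @ b # Q = P @ (b # Q)" by simp
  then have w1: "is_walk F x (last P) P" "{last P, b} \<in> F" "is_walk F b y (b # Q)"
    using assms False is_walk_append[of P "b#Q" F x y] by auto
  have "is_walk F x b (P @ [b])" using w1 False by (subst is_walk_append) auto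
  moreover have "walk_len w (P @ b # Q) = walk_len w (P @ [b]) + walk_len w (b # Q)"
    using False by (simp add: walk_len_append[of P "b#Q"] walk_len_append[of P "[b]"])
  ultimately show ?thesis using w1 by simp
qed

lemma walk_len_nonneg: "is_walk F x y xs \<Longrightarrow> (\<forall>e\<in>F. w e \<ge> 0) \<Longrightarrow> walk_len w xs \<ge> 0"
proof (induction xs arbitrary: x rule: induct_list012)
  case (3 a b zs) then show ?case by (fastforce simp: is_walk_Cons2)
qed auto

lemma walk_len_pos: assumes h: "is_walk F x y xs" "\<forall>e\<in>F. w e > 0" "x \<noteq> y" shows "walk_len w xs > 0"
proof -
  obtain a b zs where xs: "xs = a # b # zs" using h
    by (metis is_walk_Nil is_walk_single list.exhaust)
  then have "{a,b} \<in> F" "is_walk F b y (b # zs)" using h by (auto simp: is_walk_Cons2)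
  moreover have "walk_len w (b # zs) \<ge> 0" using calculation h
    by (intro walk_len_nonneg) (auto simp: less_imp_le)
  ultimately show ?thesis using xs h by (simp add: add_pos_nonneg)
qed

lemma walk_verts: "is_walk F x y xs \<Longrightarrow> F \<subseteq> edges_on V \<Longrightarrow> x \<noteq> y \<Longrightarrow> set xs \<subseteq> V"
proof (induction xs arbitrary: x rule: induct_list012)
  case (3 a b zs)
  then have e: "{a,b} \<in> edges_on V" and wb: "is_walk F b y (b # zs)" by (auto simp: is_walk_Cons2)
  then have ab: "a \<in> V" "b \<in> V" unfolding edges_on_def
    by (auto simp: doubleton_eq_iff)
  show ?case
  proof (cases "b = y")
    case True
    show ?thesis
    proof (cases zs)
      case Nil then show ?thesis using ab by simp
    next
      case (Cons c cs)
      have "is_walk F b y (b # zs)" by fact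
      then have "{b,c} \<in> edges_on V" "is_walk F c y (c # cs)" using Cons 3 by (auto simp: is_walk_Cons2)
      then have "c \<in> V" "c \<noteq> b" unfolding edges_on_def by (auto simp: doubleton_eq_iff)
      have "set (b # zs) \<subseteq> V"
      proof -
        have "is_walk F b y (b # zs)" by fact
        hence "is_walk F c y (c # cs)" using Cons by (simp add: is_walk_Cons2)
        hence "set (c # cs) \<subseteq> V" using \<open>c \<noteq> b\<close> True "3.IH"(1)[of c] Cons 3 by auto
        thus ?thesis using ab Cons by auto
      qed
      then show ?thesis using ab by simp
    qed
  next
    case False
    then show ?thesis using 3 wb ab by auto
  qed
qed auto

lemma is_walk_tl: "is_walk F y z Q \<Longrightarrow> tl Q \<noteq> [] \<Longrightarrow>
   is_walk F (hd (tl Q)) z (tl Q) \<and> {y, hd (tl Q)} \<in> F \<and> Q = y # tl Q"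
  by (cases Q; cases "tl Q") (auto simp: is_walk_Cons2)



lemma dist_le_walk: assumes "is_walk F x y xs" shows "graph_dist F w x y \<le> ereal (walk_len w xs)"
proof -
  have "ereal (walk_len w xs) \<in> {ereal (walk_len w xs) |xs. is_walk F x y xs}" using assms by blast
  then show ?thesis unfolding graph_dist_def by (rule Inf_lower)
qed

lemma dist_lt_walk: assumes "graph_dist F w x y < ereal r" shows "\<exists>xs. is_walk F x y xs \<and> walk_len w xs < r"
proof -
  obtain z where "z \<in> {ereal (walk_len w xs) |xs. is_walk F x y xs}" "z < ereal r"
    using assms unfolding graph_dist_def Inf_less_iff by blast
  then show ?thesis by auto
qed

lemma dist_sym: "graph_dist F w x y = graph_dist F w y x"
proof -
  have *: "\<And>a b. {ereal (walk_len w xs) | xs. is_walk F a b xs} \<subseteq> {ereal (walk_len w xs) | xs. is_walk F b a xs}"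
  proof
    fix a b z assume "z \<in> {ereal (walk_len w xs) | xs. is_walk F a b xs}"
    then obtain xs where "z = ereal (walk_len w xs)" "is_walk F a b xs" by blast
    moreover have "is_walk F b a (rev xs)" "walk_len w (rev xs) = walk_len w xs"
      using walk_rev[of F a b xs w] calculation by auto
    ultimately show "z \<in> {ereal (walk_len w xs) | xs. is_walk F b a xs}"
      by (intro CollectI exI[of _ "rev xs"]) simp
  qed
  show ?thesis unfolding graph_dist_def by (simp only: subset_antisym[OF *[of x y] *[of y x]])
qed

lemma dist_trans:
  assumes "graph_dist F w x y \<le> ereal a" "graph_dist F w y z \<le> ereal b"
  shows "graph_dist F w x z \<le> ereal (a + b)"
proof (rule ereal_le_epsilon2)
  fix e :: real assume e: "0 < e"
  have "ereal a < ereal (a + e/2)" using e by simp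
  then have h1: "graph_dist F w x y < ereal (a + e/2)" using assms(1) by (rule le_less_trans[rotated])
  obtain P where P: "is_walk F x y P" "walk_len w P < a + e/2" using dist_lt_walk[OF h1] by blast
  have "ereal b < ereal (b + e/2)" using e by simp
  then have h2: "graph_dist F w y z < ereal (b + e/2)" using assms(2) by (rule le_less_trans[rotated])
  obtain Q where Q: "is_walk F y z Q" "walk_len w Q < b + e/2" using dist_lt_walk[OF h2] by blast
  show "graph_dist F w x z \<le> ereal (a + b) + ereal e"
  proof (cases "tl Q = []")
    case True
    then have "Q = [y]" "z = y" using Q(1) is_walk_ends[OF Q(1)]
      by (metis last_ConsL list.collapse)+
    then have "walk_len w Q = 0" by simp
    then have "walk_len w P < a + b + e" using P Q by linarith
    have "graph_dist F w x z \<le> ereal (walk_len w P)" using dist_le_walk[OF P(1)] \<open>z = y\<close> by simp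
    also have "\<dots> \<le> ereal (a + b + e)" using \<open>walk_len w P < a + b + e\<close> by simp
    finally show ?thesis by simp
  next
    case False
    have Qe: "Q = hd Q # tl Q" "hd Q = y" using is_walk_ends[OF Q(1)] by auto
    have "is_walk F x z (P @ tl Q)" using False is_walk_ends[OF P(1)] P(1) Q(1) Qe
      using is_walk_tl[OF Q(1) False] by (subst is_walk_append) auto
    moreover have "walk_len w (P @ tl Q) = walk_len w P + walk_len w Q"
    proof -
      have "walk_len w Q = w {y, hd (tl Q)} + walk_len w (tl Q)"
        using Qe False by (metis list.collapse walk_len_Cons2)
      then show ?thesis using False is_walk_ends[OF P(1)] by (subst walk_len_append) auto
    qed
    ultimately have "graph_dist F w x z \<le> ereal (walk_len w P + walk_len w Q)"
      using dist_le_walk by metis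
    also have "\<dots> \<le> ereal (a + b) + ereal e" using P Q by simp
    finally show ?thesis .
  qed
qed

lemma dist_nonneg: assumes "\<forall>e\<in>F. w e \<ge> 0" shows "graph_dist F w x y \<ge> 0"
  unfolding graph_dist_def
proof (rule Inf_greatest)
  fix z assume "z \<in> {ereal (walk_len w xs) |xs. is_walk F x y xs}"
  then obtain xs where "z = ereal (walk_len w xs)" "is_walk F x y xs" by blast
  then show "0 \<le> z" using walk_len_nonneg[of F x y xs w] assms by simp
qed

lemma dist_self: "graph_dist F w x x \<le> 0"
  using dist_le_walk[of F x x "[x]" w] by (simp add: zero_ereal_def)

definition hw :: "'a set set \<Rightarrow> ('a set \<Rightarrow> real) \<Rightarrow> real \<Rightarrow> 'a \<Rightarrow> 'a \<Rightarrow> real \<Rightarrow> bool" where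
  "hw F W b x y L \<longleftrightarrow> (\<exists>xs. is_walk F x y xs \<and> real (walk_hops xs) \<le> b \<and> walk_len W xs \<le> L)"

lemma hw_refl: "0 \<le> b \<Longrightarrow> 0 \<le> L \<Longrightarrow> hw F W b x x L"
  unfolding hw_def by (rule exI[of _ "[x]"]) simp

lemma hw_mono: "hw F W b x y L \<Longrightarrow> b \<le> b' \<Longrightarrow> L \<le> L' \<Longrightarrow> hw F W b' x y L'"
  unfolding hw_def by force

lemma hw_edge: "{x,y} \<in> F \<Longrightarrow> hw F W 1 x y (W {x,y})"
  unfolding hw_def by (rule exI[of _ "[x,y]"]) (simp add: is_walk_Cons2)

lemma hw_sym: assumes "hw F W b x y L" shows "hw F W b y x L"
proof -
  obtain xs where xs: "is_walk F x y xs" "real (walk_hops xs) \<le> b" "walk_len W xs \<le> L"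
    using assms unfolding hw_def by blast
  show ?thesis unfolding hw_def using walk_rev[OF xs(1), of W] xs by (intro exI[of _ "rev xs"]) simp
qed

lemma hw_trans: assumes "hw F W b1 x y L1" "hw F W b2 y z L2" shows "hw F W (b1 + b2) x z (L1 + L2)"
proof -
  obtain P where P: "is_walk F x y P" "real (walk_hops P) \<le> b1" "walk_len W P \<le> L1"
    using assms(1) unfolding hw_def by blast
  obtain Q where Q: "is_walk F y z Q" "real (walk_hops Q) \<le> b2" "walk_len W Q \<le> L2"
    using assms(2) unfolding hw_def by blast
  have b2: "b2 \<ge> 0" "L2 \<ge> 0" if "Q = [y]" using Q that by auto
  show ?thesis
  proof (cases "tl Q = []")
    case True
    then have "Q = [y]" "z = y" using Q(1) is_walk_ends[OF Q(1)]
      by (metis last_ConsL list.collapse)+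
    then show ?thesis using P b2 unfolding hw_def by (intro exI[of _ P]) auto
  next
    case False
    have Qe: "Q = hd Q # tl Q" "hd Q = y" using is_walk_ends[OF Q(1)] by auto
    have "is_walk F x z (P @ tl Q)" using False is_walk_ends[OF P(1)] P(1) Q(1) Qe
      using is_walk_tl[OF Q(1) False] by (subst is_walk_append) auto
    moreover have "walk_len W (P @ tl Q) = walk_len W P + walk_len W Q"
    proof -
      have "walk_len W Q = W {y, hd (tl Q)} + walk_len W (tl Q)"
        using Qe False by (metis list.collapse walk_len_Cons2)
      then show ?thesis using False is_walk_ends[OF P(1)] by (subst walk_len_append) auto
    qed
    moreover have "walk_hops (P @ tl Q) = walk_hops P + walk_hops Q"
    proof -
      have "length Q \<ge> 2" using False by (cases Q) (auto simp: Suc_le_eq)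
      then show ?thesis using False is_walk_ends[OF P(1)]
        by (subst walk_hops_append) (auto simp: walk_hops_def)
    qed
    ultimately show ?thesis using P Q unfolding hw_def
      by (intro exI[of _ "P @ tl Q"]) auto
  qed
qed

lemma hw_hop: assumes "hw F W b x y L" shows "hop_dist F W b x y \<le> ereal L"
proof -
  obtain xs where xs: "is_walk F x y xs" "real (walk_hops xs) \<le> b" "walk_len W xs \<le> L"
    using assms unfolding hw_def by blast
  have "hop_dist F W b x y \<le> ereal (walk_len W xs)"
    unfolding hop_dist_def using xs by (intro Inf_lower) blast
  also have "\<dots> \<le> ereal L" using xs by simp
  finally show ?thesis .
qed



lemma walk_split_len:
  assumes "W \<noteq> []" "t > 0"
  shows "walk_len w W \<le> t \<or> (\<exists>P0 Q0. W = P0 @ Q0 \<and> P0 \<noteq> [] \<and> Q0 \<noteq> [] \<and>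
           walk_len w Q0 \<le> t \<and> walk_len w (last P0 # Q0) > t)"
  using assms(1)
proof (induction W)
  case (Cons a W')
  show ?case
  proof (cases "walk_len w (a # W') \<le> t")
    case False
    show ?thesis
    proof (cases "W' = []")
      case True then show ?thesis using False assms(2) by simp
    next
      case W'ne: False
      from Cons.IH[OF W'ne] show ?thesis
      proof
        assume "walk_len w W' \<le> t"
        then show ?thesis using False W'ne
          by (intro disjI2 exI[of _ "[a]"] exI[of _ W']) simp
      next
        assume "\<exists>P0 Q0. W' = P0 @ Q0 \<and> P0 \<noteq> [] \<and> Q0 \<noteq> [] \<and>
           walk_len w Q0 \<le> t \<and> walk_len w (last P0 # Q0) > t"
        then obtain P0 Q0 where "W' = P0 @ Q0" "P0 \<noteq> []" "Q0 \<noteq> []"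
           "walk_len w Q0 \<le> t" "walk_len w (last P0 # Q0) > t" by blast
        then show ?thesis by (intro disjI2 exI[of _ "a # P0"] exI[of _ Q0]) simp
      qed
    qed
  qed simp
qed simp

locale hs =
  fixes V :: "'a set" and E :: "'a set set" and w :: "'a set \<Rightarrow> real"
    and H :: "'a set set" and wH :: "'a set \<Rightarrow> real" and k :: nat
    and A :: "nat \<Rightarrow> 'a set" and piv :: "nat \<Rightarrow> 'a \<Rightarrow> 'a"
  assumes EV: "E \<subseteq> edges_on V" and wpos: "\<forall>e\<in>E. w e > 0"
    and HV: "H \<subseteq> edges_on V"
    and Hw: "\<And>x y. {x,y} \<in> H \<Longrightarrow> graph_dist E w x y < \<infinity> \<and> ereal (wH {x,y}) = graph_dist E w x y"
    and pivA: "\<And>j u. j < k \<Longrightarrow> piv j u \<in> A j"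
    and pivmin: "\<And>j u z. j < k \<Longrightarrow> z \<in> A j \<Longrightarrow> graph_dist E w u (piv j u) \<le> graph_dist E w u z"
    and pivH: "\<And>u j. u \<in> V \<Longrightarrow> j < k \<Longrightarrow>
        u = piv j u \<or> {u, piv j u} \<in> H \<or> graph_dist E w u (piv j u) = \<infinity>"
    and bunch: "\<And>i x y. i < k \<Longrightarrow> x \<in> A i \<Longrightarrow> y \<in> A i \<Longrightarrow> graph_dist E w x y < \<infinity> \<Longrightarrow>
        x = y \<or> {x,y} \<in> H \<or> (i+1 < k \<and> graph_dist E w x (piv (i+1) x) \<le> graph_dist E w x y)"
    and A0: "A 0 = V"
begin

abbreviation "d \<equiv> graph_dist E w"
abbreviation "W' \<equiv> union_weight E w H wH"
abbreviation "hg b x y L \<equiv> hw (E \<union> H) W' b x y L"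

lemma dnn: "d x y \<ge> 0"
  using dist_nonneg wpos by (metis less_imp_le)

lemma hg_E: "is_walk E x y P \<Longrightarrow> hg (real (walk_hops P)) x y (walk_len w P)"
proof (induction P arbitrary: x rule: induct_list012)
  case (2 a) then show ?case by (auto intro: hw_refl)
next
  case (3 a b zs)
  then have ab: "{a,b} \<in> E" "x = a" and wb: "is_walk E b y (b # zs)" by (auto simp: is_walk_Cons2)
  have h1: "hg 1 a b (W' {a,b})" using ab by (intro hw_edge) auto
  have h2: "W' {a,b} \<le> w {a,b}" using ab by (auto simp: union_weight_def)
  have "hg 1 a b (w {a,b})" by (rule hw_mono[OF h1 order.refl h2])
  from hw_trans[OF this "3.IH"(2)[OF wb]] show ?case using ab by simp
qed auto

lemma hg_H: assumes "{x,y} \<in> H" "d x y \<le> ereal r" shows "hg 1 x y r"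
proof -
  have h1: "hg 1 x y (W' {x,y})" using assms by (intro hw_edge) auto
  have h2: "W' {x,y} \<le> wH {x,y}" using assms by (auto simp: union_weight_def)
  have h3: "wH {x,y} \<le> r" using Hw[OF assms(1)] assms(2) by (metis ereal_less_eq(3))
  show ?thesis by (rule hw_mono[OF h1 order.refl]) (use h2 h3 in linarith)
qed

lemma rnn: "d x y \<le> ereal r \<Longrightarrow> r \<ge> 0"
proof -
  assume "d x y \<le> ereal r"
  with dnn[of x y] have "0 \<le> ereal r" by (rule order.trans)
  then show ?thesis by simp
qed

lemma hg_piv: assumes "u \<in> V" "j < k" "d u (piv j u) \<le> ereal r" shows "hg 1 u (piv j u) r"
proof -
  have r: "r \<ge> 0" using rnn[OF assms(3)] .
  from pivH[OF assms(1,2)] show ?thesis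
  proof (elim disjE)
    assume "u = piv j u" then show ?thesis using hw_refl[of 1 r] r by simp
  next
    assume "{u, piv j u} \<in> H" then show ?thesis using assms(3) by (rule hg_H)
  next
    assume "d u (piv j u) = \<infinity>" then show ?thesis using assms(3) by simp
  qed
qed

lemma edge_or:
  assumes "i < k" "x \<in> A i" "y \<in> A i" "d x y \<le> ereal r"
  shows "hg 1 x y r \<or> (i+1 < k \<and> d x (piv (i+1) x) \<le> d x y \<and> d y (piv (i+1) y) \<le> d x y)"
proof -
  have r: "r \<ge> 0" using rnn[OF assms(4)] .
  have sym: "d y x = d x y" by (rule dist_sym)
  have fin: "d x y < \<infinity>" using assms(4) le_less_trans[of "d x y" "ereal r" \<infinity>] by simp
  have fin2: "d y x < \<infinity>" using fin sym by simp
  have dyx: "d y x \<le> ereal r" using assms(4) sym by simp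
  have c1: "x = y \<or> {x,y} \<in> H \<or> (i+1 < k \<and> d x (piv (i+1) x) \<le> d x y)"
    by (rule bunch[OF assms(1,2,3) fin])
  have c2: "y = x \<or> {y,x} \<in> H \<or> (i+1 < k \<and> d y (piv (i+1) y) \<le> d y x)"
    by (rule bunch[OF assms(1,3,2) fin2])
  show ?thesis
  proof (cases "x = y \<or> {x,y} \<in> H")
    case True
    then show ?thesis
    proof
      assume "x = y" then show ?thesis using hw_refl[of 1 r "E \<union> H" W' x] r by simp
    next
      assume "{x,y} \<in> H" then show ?thesis using assms(4) by (simp add: hg_H)
    qed
  next
    case False
    then have "{y,x} \<notin> H" "y \<noteq> x" by (auto simp: insert_commute)
    then show ?thesis using c1 c2 False sym by simp
  qed
qed

end



lemma budget: fixes h t a s :: real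
  assumes "t > 0" "h \<ge> 1" "s > t"
  shows "h*(2*a/t+2) + 1 + h \<le> h*(2*(a+s)/t+2)"
proof -
  have eq: "h*(2*(a+s)/t+2) = h*(2*a/t+2) + 2*h*(s/t)" using assms(1) by (simp add: field_simps)
  have "s/t \<ge> 1" using assms by simp
  then have "h*(s/t) \<ge> h*1" using assms(2) by (intro mult_left_mono) auto
  then show ?thesis using eq assms(2) by linarith
qed

lemma budget_mono: fixes h t a b :: real
  assumes "t > 0" "h \<ge> 0" "a \<le> b"
  shows "h*(2*a/t+2) \<le> h*(2*b/t+2)"
  using assms by (intro mult_left_mono) (auto simp: divide_right_mono)

context hs begin

lemma wnn: "\<forall>e\<in>E. w e \<ge> 0" using wpos by (simp add: less_imp_le)

lemma seg:
  assumes t: "t > 0" and h1: "h \<ge> 1" and e0: "e \<ge> 0"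
    and orc0: "\<forall>u v Q. is_walk E u v Q \<and> walk_len w Q \<le> t \<longrightarrow>
       hg h u v ((1+e) * walk_len w Q) \<or>
       (d u (pv u) \<le> ereal (3 * walk_len w Q) \<and> d v (pv v) \<le> ereal (3 * walk_len w Q))"
  shows "is_walk E x y W \<Longrightarrow> hg (h * (2 * walk_len w W / t + 2)) x y ((1+e) * walk_len w W) \<or>
    (\<exists>P a Q. W = P @ a # Q \<and>
       hg (h * (2 * walk_len w (P @ [a]) / t + 2) + 1) x a ((1+e) * walk_len w (P @ [a])) \<and>
       d a (pv a) \<le> ereal (3 * t))"
proof (induction "length W" arbitrary: W y rule: less_induct)
  case less
  have orc: "hg h u v ((1+e) * walk_len w Q) \<or>
       (d u (pv u) \<le> ereal (3 * walk_len w Q) \<and> d v (pv v) \<le> ereal (3 * walk_len w Q))"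
    if "is_walk E u v Q" "walk_len w Q \<le> t" for u v Q using orc0 that by blast
  let ?l = "walk_len w W"
  have Wne: "W \<noteq> []" and hdW: "hd W = x" using is_walk_ends[OF less.prems] by auto
  have lnn: "?l \<ge> 0" using walk_len_nonneg[OF less.prems wnn] .
  from walk_split_len[OF Wne t] show ?case
  proof
    assume lt: "?l \<le> t"
    from orc[OF less.prems lt] show ?thesis
    proof
      assume g: "hg h x y ((1+e) * ?l)"
      have "h * 1 \<le> h * (2 * ?l / t + 2)" using h1 lnn t by (intro mult_left_mono) auto
      then show ?thesis using hw_mono[OF g _ order.refl] by simp
    next
      assume b: "d x (pv x) \<le> ereal (3 * ?l) \<and> d y (pv y) \<le> ereal (3 * ?l)"
      have W: "W = [] @ x # tl W" using Wne hdW by (cases W) auto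
      have "hg (h * (2 * walk_len w ([] @ [x]) / t + 2) + 1) x x ((1+e) * walk_len w ([] @ [x]))"
        using h1 by (intro hw_refl) auto
      moreover have "d x (pv x) \<le> ereal (3 * t)" using b lt
        by (meson ereal_less_eq(3) mult_left_mono order.trans zero_le_numeral)
      ultimately show ?thesis using W by blast
    qed
  next
    assume "\<exists>P0 Q0. W = P0 @ Q0 \<and> P0 \<noteq> [] \<and> Q0 \<noteq> [] \<and>
           walk_len w Q0 \<le> t \<and> walk_len w (last P0 # Q0) > t"
    then obtain P0 Q0 where PQ: "W = P0 @ Q0" "P0 \<noteq> []" "Q0 \<noteq> []"
      "walk_len w Q0 \<le> t" "walk_len w (last P0 # Q0) > t" by blast
    define c where "c = last P0"
    define q where "q = hd Q0"
    have Q0e: "Q0 = q # tl Q0" using PQ(3) q_def by simp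
    have wk: "is_walk E x c P0" "{c,q} \<in> E" "is_walk E q y Q0"
      using less.prems is_walk_append[OF PQ(2,3), of E x y] PQ(1) c_def q_def by auto
    have lenW: "?l = walk_len w P0 + w {c,q} + walk_len w Q0"
      using walk_len_append[OF PQ(2,3)] PQ(1) c_def q_def by simp
    have lenc: "walk_len w (last P0 # Q0) = w {c,q} + walk_len w Q0"
      using Q0e c_def by (metis walk_len_Cons2)
    have shorter: "length P0 < length W" using PQ by simp
    have wcq: "w {c,q} > 0" using wk(2) wpos by auto
    have edge: "hg 1 c q (w {c,q})" using hg_E[of c q "[c,q]"] wk(2) by (simp add: is_walk_Cons2)
    from less.hyps[OF shorter wk(1)] show ?thesis
    proof
      assume g: "hg (h * (2 * walk_len w P0 / t + 2)) x c ((1+e) * walk_len w P0)"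
      have ge: "hg (h * (2 * walk_len w P0 / t + 2) + 1) x q ((1+e) * walk_len w P0 + w {c,q})"
        using hw_trans[OF g edge] .
      from orc[OF wk(3) PQ(4)] show ?thesis
      proof
        assume g2: "hg h q y ((1+e) * walk_len w Q0)"
        have "hg (h * (2 * walk_len w P0 / t + 2) + 1 + h) x y
               ((1+e) * walk_len w P0 + w {c,q} + (1+e) * walk_len w Q0)"
          using hw_trans[OF ge g2] .
        moreover have "h * (2 * walk_len w P0 / t + 2) + 1 + h \<le> h * (2 * ?l / t + 2)"
          using budget[OF t h1, of "w {c,q} + walk_len w Q0" "walk_len w P0"] PQ(5) lenc lenW
          by (simp add: add.assoc)
        moreover have "(1+e) * walk_len w P0 + w {c,q} + (1+e) * walk_len w Q0 \<le> (1+e) * ?l"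
          using lenW e0 wcq by (simp add: algebra_simps)
        ultimately have "hg (h * (2 * ?l / t + 2)) x y ((1+e) * ?l)" by (rule hw_mono)
        then show ?thesis by blast
      next
        assume b: "d q (pv q) \<le> ereal (3 * walk_len w Q0) \<and> d y (pv y) \<le> ereal (3 * walk_len w Q0)"
        have W: "W = P0 @ q # tl Q0" using PQ(1) Q0e by simp
        have lp: "walk_len w (P0 @ [q]) = walk_len w P0 + w {c,q}"
          using walk_len_append[OF PQ(2), of "[q]"] c_def by simp
        have "h * (2 * walk_len w P0 / t + 2) + 1 \<le> h * (2 * walk_len w (P0 @ [q]) / t + 2) + 1"
          using budget_mono[OF t, of h "walk_len w P0" "walk_len w (P0 @ [q])"] lp wcq h1 by simp
        moreover have "(1+e) * walk_len w P0 + w {c,q} \<le> (1+e) * walk_len w (P0 @ [q])"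
          using lp e0 wcq by (simp add: algebra_simps)
        ultimately have "hg (h * (2 * walk_len w (P0 @ [q]) / t + 2) + 1) x q ((1+e) * walk_len w (P0 @ [q]))"
          using hw_mono[OF ge] by blast
        moreover have "d q (pv q) \<le> ereal (3 * t)" using b PQ(4)
          by (meson ereal_less_eq(3) mult_left_mono order.trans zero_le_numeral)
        ultimately show ?thesis using W by blast
      qed
    next
      assume "\<exists>P a Q. P0 = P @ a # Q \<and>
       hg (h * (2 * walk_len w (P @ [a]) / t + 2) + 1) x a ((1+e) * walk_len w (P @ [a])) \<and>
       d a (pv a) \<le> ereal (3 * t)"
      then obtain P a Q where "P0 = P @ a # Q"
        "hg (h * (2 * walk_len w (P @ [a]) / t + 2) + 1) x a ((1+e) * walk_len w (P @ [a]))"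
        "d a (pv a) \<le> ereal (3 * t)" by blast
      moreover have "W = P @ a # (Q @ Q0)" using calculation(1) PQ(1) by simp
      ultimately show ?thesis by blast
    qed
  qed
qed

end


context hs begin

lemma claim:
  fixes \<delta> :: real assumes dl: "0 < \<delta>" "\<delta> \<le> 1/12"
  shows "i < k \<Longrightarrow> is_walk E x y W \<Longrightarrow>
    hg ((2/\<delta>+9)^i) x y ((1 + 12*\<delta>*i) * walk_len w W) \<or>
    (Suc i < k \<and> d x (piv (Suc i) x) \<le> ereal (3 * walk_len w W) \<and> d y (piv (Suc i) y) \<le> ereal (3 * walk_len w W))"
proof (induction i arbitrary: x y W)
  case 0
  let ?l = "walk_len w W"
  have lnn: "?l \<ge> 0" using walk_len_nonneg[OF "0.prems"(2) wnn] .
  show ?case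
  proof (cases "x = y")
    case True then show ?thesis using hw_refl[of 1 ?l "E \<union> H" W' x] lnn by simp
  next
    case False
    have "set W \<subseteq> V" using walk_verts[OF "0.prems"(2) EV False] .
    moreover have "x \<in> set W" "y \<in> set W" using is_walk_ends[OF "0.prems"(2)]
      by (metis hd_in_set, metis last_in_set)
    ultimately have xy: "x \<in> A 0" "y \<in> A 0" using A0 by auto
    have dxy: "d x y \<le> ereal ?l" using dist_le_walk[OF "0.prems"(2)] .
    have l3: "ereal ?l \<le> ereal (3 * ?l)" using lnn by simp
    from edge_or[OF "0.prems"(1) xy dxy] show ?thesis
    proof
      assume "hg 1 x y ?l" then show ?thesis by simp
    next
      assume "0+1 < k \<and> d x (piv (0+1) x) \<le> d x y \<and> d y (piv (0+1) y) \<le> d x y"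
      then show ?thesis using dxy l3 by (auto intro: order.trans)
    qed
  qed
next
  case (Suc i)
  let ?l = "walk_len w W"
  define h where "h = (2/\<delta>+9)^i"
  define e where "e = 12*\<delta>*i"
  have lnn: "?l \<ge> 0" using walk_len_nonneg[OF Suc.prems(2) wnn] .
  have h1: "h \<ge> 1" unfolding h_def using dl by (intro one_le_power) (simp add: field_simps)
  have e0: "e \<ge> 0" unfolding e_def using dl by simp
  have hS: "(2/\<delta>+9)^(Suc i) = (2/\<delta>+9) * h" unfolding h_def by simp
  have eS: "1 + 12*\<delta>*real (Suc i) = 1 + e + 12*\<delta>" unfolding e_def by (simp add: algebra_simps)
  show ?case
  proof (cases "x = y")
    case True then show ?thesis using hw_refl[of "(2/\<delta>+9)^(Suc i)" "(1 + 12*\<delta>*real (Suc i)) * ?l" "E \<union> H" W' x] lnn dl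
      by (simp add: add_pos_nonneg less_imp_le)
  next
    case False
    have lpos: "?l > 0" using walk_len_pos[OF Suc.prems(2) wpos False] .
    define t where "t = \<delta> * ?l"
    have t: "t > 0" unfolding t_def using dl lpos by simp
    have ik: "i < k" using Suc.prems by simp
    have orc: "\<forall>u v Q. is_walk E u v Q \<and> walk_len w Q \<le> t \<longrightarrow> hg h u v ((1+e) * walk_len w Q) \<or>
       (d u (piv (Suc i) u) \<le> ereal (3 * walk_len w Q) \<and> d v (piv (Suc i) v) \<le> ereal (3 * walk_len w Q))"
      using Suc.IH[OF ik] unfolding h_def e_def by auto
    have VW: "set W \<subseteq> V" using walk_verts[OF Suc.prems(2) EV False] .
    have l2t: "2 * ?l / t = 2 / \<delta>" unfolding t_def using lpos dl by (simp add: field_simps)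
    note seg1 = seg[where pv="piv (Suc i)", OF t h1 e0 orc, of x y W]
    from seg1[OF Suc.prems(2)] show ?thesis
    proof
      assume g: "hg (h * (2 * ?l / t + 2)) x y ((1+e) * ?l)"
      have "h * (2 * ?l / t + 2) \<le> (2/\<delta>+9)^(Suc i)" using l2t hS h1 by (simp add: algebra_simps)
      moreover have "(1+e) * ?l \<le> (1 + 12*\<delta>*real (Suc i)) * ?l" using eS lnn dl
        by (intro mult_right_mono) auto
      ultimately show ?thesis using hw_mono[OF g] by blast
    next
      assume "\<exists>P a Q. W = P @ a # Q \<and>
       hg (h * (2 * walk_len w (P @ [a]) / t + 2) + 1) x a ((1+e) * walk_len w (P @ [a])) \<and>
       d a (piv (Suc i) a) \<le> ereal (3 * t)"
      then obtain P a Q where PaQ: "W = P @ a # Q"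
        and ga: "hg (h * (2 * walk_len w (P @ [a]) / t + 2) + 1) x a ((1+e) * walk_len w (P @ [a]))"
        and pa: "d a (piv (Suc i) a) \<le> ereal (3 * t)" by blast
      define sa where "sa = walk_len w (P @ [a])"
      define R where "R = walk_len w (a # Q)"
      have sp: "is_walk E x a (P @ [a])" "is_walk E a y (a # Q)" "?l = sa + R"
        using walk_split[of E x y P a Q w] Suc.prems(2) PaQ sa_def R_def by auto
      have rv: "is_walk E y a (rev (a # Q))" "walk_len w (rev (a # Q)) = R"
        using walk_rev[OF sp(2), of w] R_def by auto
      have saR: "sa \<ge> 0" "R \<ge> 0" using walk_len_nonneg[OF sp(1) wnn] walk_len_nonneg[OF sp(2) wnn]
        sa_def R_def by auto
      have aV: "a \<in> V" using VW PaQ by auto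
      have dxa: "d x a \<le> ereal sa" using dist_le_walk[OF sp(1)] sa_def by simp
      note seg2 = seg[where pv="piv (Suc i)", OF t h1 e0 orc, of y a "rev (a # Q)"]
      from seg2[OF rv(1)] show ?thesis
      proof
        assume g2: "hg (h * (2 * walk_len w (rev (a # Q)) / t + 2)) y a ((1+e) * walk_len w (rev (a # Q)))"
        have g2': "hg (h * (2 * R / t + 2)) a y ((1+e) * R)" using hw_sym[OF g2] rv(2) by simp
        have tr: "hg (h * (2 * sa / t + 2) + 1 + h * (2 * R / t + 2)) x y ((1+e) * sa + (1+e) * R)"
          using hw_trans[OF ga[folded sa_def] g2'] .
        have X: "2 * sa / t + 2 * R / t = 2 / \<delta>" using l2t sp(3) by (simp add: add_divide_distrib)
        have "h * (2 * sa / t + 2) + 1 + h * (2 * R / t + 2) = h * (2 * sa / t + 2 * R / t) + 4*h + 1"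
          by (simp add: algebra_simps)
        also have "\<dots> = h * (2/\<delta> + 4) + 1" using X by (simp add: algebra_simps)
        also have "\<dots> \<le> (2/\<delta>+9)^(Suc i)" using hS h1 by (simp add: algebra_simps)
        finally have hb: "h * (2 * sa / t + 2) + 1 + h * (2 * R / t + 2) \<le> (2/\<delta>+9)^(Suc i)" .
        have "(1+e) * sa + (1+e) * R \<le> (1 + 12*\<delta>*real (Suc i)) * ?l" using eS sp(3) lnn dl saR
          by (simp add: algebra_simps)
        then show ?thesis using hw_mono[OF tr hb] by blast
      next
        assume "\<exists>P' b Q'. rev (a # Q) = P' @ b # Q' \<and>
          hg (h * (2 * walk_len w (P' @ [b]) / t + 2) + 1) y b ((1+e) * walk_len w (P' @ [b])) \<and>
          d b (piv (Suc i) b) \<le> ereal (3 * t)"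
        then obtain P' b Q' where PbQ: "rev (a # Q) = P' @ b # Q'"
          and gb: "hg (h * (2 * walk_len w (P' @ [b]) / t + 2) + 1) y b ((1+e) * walk_len w (P' @ [b]))"
          and pb: "d b (piv (Suc i) b) \<le> ereal (3 * t)" by blast
        define r where "r = walk_len w (P' @ [b])"
        define m where "m = walk_len w (b # Q')"
        have sp2: "is_walk E y b (P' @ [b])" "is_walk E b a (b # Q')" "R = r + m"
          using walk_split[of E y a P' b Q' w] rv PbQ r_def m_def by auto
        have rm: "r \<ge> 0" "m \<ge> 0" using walk_len_nonneg[OF sp2(1) wnn] walk_len_nonneg[OF sp2(2) wnn]
          r_def m_def by auto
        have bV: "b \<in> V"
        proof -
          have "b \<in> set (rev (a # Q))" using PbQ by simp
          then show ?thesis using VW PaQ by auto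
        qed
        have dyb: "d y b \<le> ereal r" using dist_le_walk[OF sp2(1)] r_def by simp
        have dab: "d a b \<le> ereal m" using dist_le_walk[OF sp2(2)] m_def dist_sym by metis
        define pa' where "pa' = piv (Suc i) a"
        define pb' where "pb' = piv (Suc i) b"
        have paA: "pa' \<in> A (Suc i)" "pb' \<in> A (Suc i)" using pivA Suc.prems(1) pa'_def pb'_def by auto
        have dapa: "d pa' a \<le> ereal (3*t)" using pa pa'_def dist_sym by metis
        have dbpb: "d b pb' \<le> ereal (3*t)" using pb pb'_def by simp
        have dpp: "d pa' pb' \<le> ereal (6*t + m)"
        proof -
          have "d pa' b \<le> ereal (3*t + m)" using dist_trans[OF dapa dab] .
          from dist_trans[OF this dbpb] show ?thesis by (simp add: algebra_simps)
        qed
        have hyb: "hg (h * (2 * r / t + 2) + 1) b y ((1+e) * r)" using hw_sym[OF gb] r_def by simp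
        have ha: "hg 1 a pa' (3*t)" using hg_piv[OF aV _ pa] Suc.prems(1) pa'_def by simp
        have hb: "hg 1 pb' b (3*t)" using hw_sym[OF hg_piv[OF bV _ pb]] Suc.prems(1) pb'_def by simp
        have sum: "sa + r + m = ?l" using sp(3) sp2(3) by simp
        from edge_or[OF Suc.prems(1) paA dpp] show ?thesis
        proof
          assume he: "hg 1 pa' pb' (6*t + m)"
          have tr: "hg (h * (2 * sa / t + 2) + 1 + 1 + 1 + 1 + (h * (2 * r / t + 2) + 1)) x y
              ((1+e) * sa + 3*t + (6*t + m) + 3*t + (1+e) * r)"
            using hw_trans[OF hw_trans[OF hw_trans[OF hw_trans[OF ga[folded sa_def] ha] he] hb] hyb] .
          have "2 * sa / t + 2 * r / t \<le> 2 * ?l / t" using sum rm t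
            by (simp add: add_divide_distrib[symmetric] divide_right_mono)
          then have "h * (2 * sa / t + 2 * r / t) \<le> h * (2/\<delta>)" using l2t h1
            by (intro mult_left_mono) auto
          then have hb': "h * (2 * sa / t + 2) + 1 + 1 + 1 + 1 + (h * (2 * r / t + 2) + 1) \<le> (2/\<delta>+9)^(Suc i)"
            using hS h1 by (simp add: algebra_simps)
          have em: "e * m \<ge> 0" using e0 rm by simp
          have "(1+e) * ?l = (1+e)*sa + (1+e)*r + m + e*m" unfolding sum[symmetric]
            by (simp add: algebra_simps)
          then have "(1+e) * sa + 3*t + (6*t + m) + 3*t + (1+e) * r \<le> (1+e) * ?l + 12 * t"
            using em by linarith
          also have "\<dots> = (1 + 12*\<delta>*real (Suc i)) * ?l" using eS t_def by (simp add: algebra_simps)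
          finally have lb: "(1+e) * sa + 3*t + (6*t + m) + 3*t + (1+e) * r \<le> (1 + 12*\<delta>*real (Suc i)) * ?l" .
          show ?thesis using hw_mono[OF tr hb' lb] by blast
        next
          assume pv: "Suc i + 1 < k \<and> d pa' (piv (Suc i + 1) pa') \<le> d pa' pb' \<and>
                 d pb' (piv (Suc i + 1) pb') \<le> d pa' pb'"
          have k2: "Suc (Suc i) < k" using pv by simp
          have "9*\<delta> \<le> 1" using dl by simp
          from mult_right_mono[OF this lnn] have t9: "9 * t \<le> ?l" unfolding t_def by (simp add: algebra_simps)
          define q where "q = piv (Suc (Suc i)) pa'"
          define q' where "q' = piv (Suc (Suc i)) pb'"
          have qA: "q \<in> A (Suc (Suc i))" "q' \<in> A (Suc (Suc i))" using pivA k2 q_def q'_def by auto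
          have pv': "d pa' q \<le> d pa' pb'" "d pb' q' \<le> d pa' pb'" using pv q_def q'_def by simp_all
          have dpq: "d pa' q \<le> ereal (6*t + m)" using order.trans[OF pv'(1) dpp] .
          have dpq': "d pb' q' \<le> ereal (6*t + m)" using order.trans[OF pv'(2) dpp] .
          have "d x q \<le> ereal (sa + (3*t + (6*t + m)))"
            using dist_trans[OF dxa dist_trans[OF pa[folded pa'_def] dpq]] .
          also have "\<dots> \<le> ereal (3 * ?l)" using sum t9 rm lnn saR by simp
          finally have X: "d x (piv (Suc (Suc i)) x) \<le> ereal (3 * ?l)"
            using pivmin[OF k2 qA(1), of x] by (rule order.trans[rotated])
          have "d y q' \<le> ereal (r + (3*t + (6*t + m)))"
            using dist_trans[OF dyb dist_trans[OF dbpb dpq']] .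
          also have "\<dots> \<le> ereal (3 * ?l)" using sum t9 rm lnn saR by simp
          finally have Y: "d y (piv (Suc (Suc i)) y) \<le> ereal (3 * ?l)"
            using pivmin[OF k2 qA(2), of y] by (rule order.trans[rotated])
          show ?thesis using k2 X Y by simp
        qed
      qed
    qed
  qed
qed

end


context hs begin

lemma edge_lb: assumes "{x,y} \<in> E \<union> H" shows "d x y \<le> ereal (W' {x,y})"
proof -
  have dE: "d x y \<le> ereal (w {x,y})" if "{x,y} \<in> E"
    using dist_le_walk[of E x y "[x,y]" w] that by (simp add: is_walk_Cons2)
  have dH: "d x y = ereal (wH {x,y})" if "{x,y} \<in> H" using Hw[OF that] by simp
  show ?thesis
  proof (cases "{x,y} \<in> E \<and> {x,y} \<in> H")
    case True
    then show ?thesis using dE dH by (auto simp: union_weight_def min_def)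
  next
    case False
    then show ?thesis using assms dE dH by (auto simp: union_weight_def)
  qed
qed

lemma walk_lb: "is_walk (E \<union> H) x y xs \<Longrightarrow> d x y \<le> ereal (walk_len W' xs)"
proof (induction xs arbitrary: x rule: induct_list012)
  case (2 a) then show ?case using dist_self[of E w a] by (simp add: zero_ereal_def)
next
  case (3 a b zs)
  then have ab: "{a,b} \<in> E \<union> H" "x = a" and wb: "is_walk (E \<union> H) b y (b # zs)"
    by (auto simp: is_walk_Cons2)
  from dist_trans[OF edge_lb[OF ab(1)] "3.IH"(2)[OF wb]] show ?case using ab by simp
qed simp

lemma hopset:
  fixes \<epsilon> \<beta> :: real
  assumes e: "0 < \<epsilon>" "\<epsilon> < 1" and k1: "k \<ge> 1" and b: "\<beta> \<ge> (24*k/\<epsilon> + 9)^(k-1)"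
  shows "is_hopset V E w H wH \<beta> \<epsilon>"
proof -
  define \<delta> where "\<delta> = \<epsilon> / (12*k)"
  have kpos: "real k \<ge> 1" using k1 by simp
  have dl: "0 < \<delta>" "\<delta> \<le> 1/12" unfolding \<delta>_def using e kpos by (auto simp: field_simps)
  have dd: "2/\<delta> + 9 = 24*k/\<epsilon> + 9" unfolding \<delta>_def using e kpos by (simp add: field_simps)
  have de: "12*\<delta>*real (k-1) \<le> \<epsilon>" unfolding \<delta>_def using e kpos k1 by (simp add: field_simps of_nat_diff)
  have up: "hop_dist (E \<union> H) W' \<beta> u v \<le> ereal ((1+\<epsilon>) * walk_len w P)" if "is_walk E u v P" for u v P
  proof -
    have "k - 1 < k" using k1 by simp
    from claim[OF dl this that] have c1: "hg ((2/\<delta>+9)^(k-1)) u v ((1 + 12*\<delta>*real (k-1)) * walk_len w P)"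
      using k1 by simp
    moreover have c2: "(1 + 12*\<delta>*real (k-1)) * walk_len w P \<le> (1+\<epsilon>) * walk_len w P"
      using de walk_len_nonneg[OF that wnn] by (intro mult_right_mono) auto
    have c3: "(2/\<delta>+9)^(k-1) \<le> \<beta>" using b dd by simp
    have "hg \<beta> u v ((1+\<epsilon>) * walk_len w P)" by (rule hw_mono[OF c1 c3 c2])
    then show ?thesis by (rule hw_hop)
  qed
  have upper: "hop_dist (E \<union> H) W' \<beta> u v \<le> ereal (1 + \<epsilon>) * d u v" for u v
  proof (cases "d u v = \<infinity>")
    case True then show ?thesis using e by simp
  next
    case False
    then obtain D where D: "d u v = ereal D" using dnn[of u v]
      by (cases "d u v") auto
    show ?thesis
    proof (rule ereal_le_epsilon2)
      fix \<eta> :: real assume \<eta>: "\<eta> > 0"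
      define \<eta>' where "\<eta>' = \<eta> / (1+\<epsilon>)"
      have \<eta>': "\<eta>' > 0" "(1+\<epsilon>) * \<eta>' = \<eta>" unfolding \<eta>'_def using \<eta> e by auto
      have lt: "d u v < ereal (D + \<eta>')" using D \<eta>' by simp
      obtain P where P: "is_walk E u v P" "walk_len w P < D + \<eta>'" using dist_lt_walk[OF lt] by blast
      have "hop_dist (E \<union> H) W' \<beta> u v \<le> ereal ((1+\<epsilon>) * walk_len w P)" by (rule up[OF P(1)])
      also have "\<dots> \<le> ereal ((1+\<epsilon>) * D + \<eta>)"
      proof -
        have "(1+\<epsilon>) * walk_len w P \<le> (1+\<epsilon>) * (D + \<eta>')" using P(2) e by (intro mult_left_mono) auto
        also have "\<dots> = (1+\<epsilon>) * D + \<eta>" using \<eta>'(2) by (simp add: distrib_left)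
        finally show ?thesis by simp
      qed
      also have "\<dots> = ereal (1 + \<epsilon>) * d u v + ereal \<eta>" using D by simp
      finally show "hop_dist (E \<union> H) W' \<beta> u v \<le> ereal (1 + \<epsilon>) * d u v + ereal \<eta>" .
    qed
  qed
  have lower: "d u v \<le> hop_dist (E \<union> H) W' \<beta> u v" for u v
    unfolding hop_dist_def
  proof (rule Inf_greatest)
    fix z assume "z \<in> {ereal (walk_len W' xs) |xs. is_walk (E \<union> H) u v xs \<and> real (walk_hops xs) \<le> \<beta>}"
    then obtain xs where "z = ereal (walk_len W' xs)" "is_walk (E \<union> H) u v xs" by blast
    then show "d u v \<le> z" using walk_lb by simp
  qed
  have hwb: "\<forall>u v. {u, v} \<in> H \<longrightarrow> d u v \<le> ereal (wH {u, v})" using Hw by simp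
  show ?thesis unfolding is_hopset_def using HV hwb upper lower by blast
qed

end


lemma tw_count:
  "distinct \<sigma> \<Longrightarrow> (\<Sum>S\<in>{S. S \<subseteq> set \<sigma> \<and> card S = s}. length (takeWhile (\<lambda>z. z \<notin> S) \<sigma>))
     = length \<sigma> choose Suc s"
proof (induction \<sigma>)
  case Nil then show ?case by simp
next
  case (Cons a \<sigma>')
  let ?f = "\<lambda>S. length (takeWhile (\<lambda>z. z \<notin> S) (a # \<sigma>'))"
  define X where "X = {S. S \<subseteq> set (a # \<sigma>') \<and> card S = s}"
  define X1 where "X1 = {S. S \<subseteq> set \<sigma>' \<and> card S = s}"
  have an: "a \<notin> set \<sigma>'" "distinct \<sigma>'" using Cons.prems by auto
  have finX: "finite X" unfolding X_def
    by (rule finite_subset[of _ "Pow (set (a # \<sigma>'))"]) auto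
  have sub: "X1 \<subseteq> X" unfolding X_def X1_def by auto
  have "sum ?f X = sum ?f X1 + sum ?f (X - X1)"
    using sum.subset_diff[OF sub finX, of ?f] by (simp only: add.commute)
  moreover have "sum ?f (X - X1) = 0"
  proof (rule sum.neutral, intro ballI)
    fix S assume "S \<in> X - X1"
    then have "a \<in> S" unfolding X_def X1_def by auto
    then show "?f S = 0" by simp
  qed
  moreover have "sum ?f X1 = (\<Sum>S\<in>X1. Suc (length (takeWhile (\<lambda>z. z \<notin> S) \<sigma>')))"
  proof (rule sum.cong[OF refl])
    fix S assume "S \<in> X1"
    then have "a \<notin> S" using an unfolding X1_def by auto
    then show "?f S = Suc (length (takeWhile (\<lambda>z. z \<notin> S) \<sigma>'))" by simp
  qed
  moreover have "(\<Sum>S\<in>X1. Suc (length (takeWhile (\<lambda>z. z \<notin> S) \<sigma>'))) =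
      card X1 + (\<Sum>S\<in>X1. length (takeWhile (\<lambda>z. z \<notin> S) \<sigma>'))"
    by (simp add: sum_Suc)
  moreover have "card X1 = length \<sigma>' choose s"
    unfolding X1_def using n_subsets[of "set \<sigma>'" s] distinct_card[OF an(2)] by simp
  moreover have "(\<Sum>S\<in>X1. length (takeWhile (\<lambda>z. z \<notin> S) \<sigma>')) = length \<sigma>' choose Suc s"
    unfolding X1_def using Cons.IH[OF an(2)] .
  ultimately show ?case unfolding X_def by simp
qed

lemma avg_exists:
  fixes f :: "'a \<Rightarrow> real"
  assumes "finite X" "X \<noteq> {}"
  shows "\<exists>x\<in>X. real (card X) * f x \<le> sum f X"
proof (rule ccontr)
  assume "\<not> ?thesis"
  then have lt: "\<forall>x\<in>X. sum f X < real (card X) * f x" by auto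
  have "(\<Sum>x\<in>X. sum f X) < (\<Sum>x\<in>X. real (card X) * f x)"
    by (rule sum_strict_mono[OF assms]) (use lt in auto)
  then show False by (simp add: sum_distrib_left)
qed

lemma sample_exists:
  fixes A :: "'a set" and \<sigma> :: "'a \<Rightarrow> 'a list"
  assumes finA: "finite A" and s: "s \<le> card A"
    and sig: "\<And>x. x \<in> A \<Longrightarrow> distinct (\<sigma> x) \<and> set (\<sigma> x) = A"
  shows "\<exists>S. S \<subseteq> A \<and> card S = s \<and>
    real (Suc s) * real (\<Sum>x\<in>A. length (takeWhile (\<lambda>z. z \<notin> S) (\<sigma> x))) \<le> real (card A) ^ 2"
proof -
  define N where "N = card A"
  define X where "X = {S. S \<subseteq> A \<and> card S = s}"
  define g where "g S = (\<Sum>x\<in>A. length (takeWhile (\<lambda>z. z \<notin> S) (\<sigma> x)))" for S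
  have finX: "finite X" unfolding X_def by (rule finite_subset[of _ "Pow A"]) (auto simp: finA)
  have cX: "card X = N choose s" unfolding X_def N_def using n_subsets[OF finA] .
  have cpos: "N choose s > 0" using s N_def by simp
  then have Xne: "X \<noteq> {}" using cX by auto
  have "sum g X = (\<Sum>x\<in>A. \<Sum>S\<in>X. length (takeWhile (\<lambda>z. z \<notin> S) (\<sigma> x)))"
    unfolding g_def by (rule sum.swap)
  also have "\<dots> = (\<Sum>x\<in>A. N choose Suc s)"
  proof (rule sum.cong[OF refl])
    fix x assume "x \<in> A"
    then have "distinct (\<sigma> x)" "set (\<sigma> x) = A" using sig by auto
    moreover then have "length (\<sigma> x) = N" using N_def distinct_card by metis
    ultimately show "(\<Sum>S\<in>X. length (takeWhile (\<lambda>z. z \<notin> S) (\<sigma> x))) = N choose Suc s"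
      unfolding X_def using tw_count[of "\<sigma> x" s] by simp
  qed
  finally have sg: "sum g X = N * (N choose Suc s)" using N_def by simp
  obtain S where S: "S \<in> X" "real (card X) * real (g S) \<le> (\<Sum>S\<in>X. real (g S))"
    using avg_exists[OF finX Xne, of "\<lambda>S. real (g S)"] by blast
  have key: "Suc s * (N choose Suc s) \<le> N * (N choose s)"
  proof (cases N)
    case 0 then show ?thesis by simp
  next
    case (Suc n)
    have "Suc s * (N choose Suc s) = N * (n choose s)" using Suc_times_binomial[of s n] Suc by simp
    also have "\<dots> \<le> N * (N choose s)"
    proof -
      have "n choose s \<le> Suc n choose s" by (cases s) auto
      then show ?thesis unfolding Suc by (rule mult_le_mono2)
    qed
    finally show ?thesis .
  qed
  have "real (N choose s) * real (g S) \<le> real N * real (N choose Suc s)"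
    using S(2) cX sg by (simp add: of_nat_sum[symmetric])
  then have "real (Suc s) * (real (N choose s) * real (g S)) \<le> real (Suc s) * (real N * real (N choose Suc s))"
    by (rule mult_left_mono) simp
  moreover have "real (Suc s) * (real (N choose s) * real (g S)) = real (N choose s) * (real (Suc s) * real (g S))"
    by (simp add: algebra_simps)
  ultimately have "real (N choose s) * (real (Suc s) * real (g S)) \<le> real (Suc s) * (real N * real (N choose Suc s))"
    by simp
  also have "\<dots> \<le> real N * (real N * real (N choose s))"
  proof -
    have k2: "real (Suc s) * real (N choose Suc s) \<le> real N * real (N choose s)"
      using key unfolding of_nat_mult[symmetric] of_nat_le_iff .
    have "real (Suc s) * (real N * real (N choose Suc s)) = real N * (real (Suc s) * real (N choose Suc s))"
      by (simp add: algebra_simps)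
    also have "\<dots> \<le> real N * (real N * real (N choose s))" using k2 by (rule mult_left_mono) simp
    finally show ?thesis .
  qed
  also have "\<dots> = real (N choose s) * real N ^ 2" by (simp add: algebra_simps power2_eq_square)
  finally have "real (Suc s) * real (g S) \<le> real N ^ 2" using cpos
    by (simp add: mult_le_cancel_left)
  then show ?thesis using S(1) unfolding X_def g_def N_def by blast
qed

lemma tw_sorted:
  assumes "sorted (map f \<sigma>)" "y \<in> set \<sigma>" "y \<notin> set (takeWhile P \<sigma>)"
  shows "\<exists>z\<in>set \<sigma>. \<not> P z \<and> f z \<le> f y"
  using assms
proof (induction \<sigma>)
  case (Cons a \<sigma>')
  show ?case
  proof (cases "P a")
    case True
    then have "y \<noteq> a" "y \<in> set \<sigma>'" "y \<notin> set (takeWhile P \<sigma>')" using Cons.prems by auto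
    then show ?thesis using Cons by auto
  next
    case False
    have "f a \<le> f y" using Cons.prems(1,2) by (cases "y = a") auto
    then show ?thesis using False by auto
  qed
qed simp



definition sig :: "(nat \<Rightarrow> ereal) \<Rightarrow> nat set \<Rightarrow> nat list" where
  "sig f A = sort_key f (sorted_list_of_set A)"

lemma sig_props: "finite A \<Longrightarrow> distinct (sig f A) \<and> set (sig f A) = A \<and> sorted (map f (sig f A))"
  unfolding sig_def by simp

definition cost :: "(nat \<Rightarrow> nat \<Rightarrow> ereal) \<Rightarrow> nat set \<Rightarrow> nat set \<Rightarrow> nat" where
  "cost key A S = (\<Sum>x\<in>A. length (takeWhile (\<lambda>z. z \<notin> S) (sig (key x) A)))"

definition next_lev :: "(nat \<Rightarrow> nat \<Rightarrow> ereal) \<Rightarrow> nat \<Rightarrow> nat set \<Rightarrow> nat set" where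
  "next_lev key s A = (SOME S. S \<subseteq> A \<and> card S = s \<and> real (Suc s) * real (cost key A S) \<le> real (card A) ^ 2)"

lemma next_lev_spec:
  assumes "finite A" "s \<le> card A"
  shows "next_lev key s A \<subseteq> A \<and> card (next_lev key s A) = s \<and>
    real (Suc s) * real (cost key A (next_lev key s A)) \<le> real (card A) ^ 2"
proof -
  have "\<exists>S. S \<subseteq> A \<and> card S = s \<and> real (Suc s) * real (cost key A S) \<le> real (card A) ^ 2"
    using sample_exists[OF assms, of "\<lambda>x. sig (key x) A"] sig_props[OF assms(1)]
    unfolding cost_def by blast
  then show ?thesis unfolding next_lev_def by (rule someI_ex)
qed

primrec levs :: "(nat \<Rightarrow> nat \<Rightarrow> ereal) \<Rightarrow> (nat \<Rightarrow> nat) \<Rightarrow> nat set \<Rightarrow> nat \<Rightarrow> nat set" where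
  "levs key c V 0 = V"
| "levs key c V (Suc i) = next_lev key (c (Suc i)) (levs key c V i)"

lemma levs_props:
  assumes "finite V" "card V = c 0" "\<And>i. c (Suc i) \<le> c i"
  shows "finite (levs key c V i) \<and> card (levs key c V i) = c i \<and> levs key c V i \<subseteq> V \<and>
    levs key c V (Suc i) \<subseteq> levs key c V i \<and>
    real (Suc (c (Suc i))) * real (cost key (levs key c V i) (levs key c V (Suc i))) \<le> real (c i) ^ 2"
proof (induction i)
  case 0
  have "next_lev key (c (Suc 0)) V \<subseteq> V \<and> card (next_lev key (c (Suc 0)) V) = c (Suc 0) \<and>
    real (Suc (c (Suc 0))) * real (cost key V (next_lev key (c (Suc 0)) V)) \<le> real (card V) ^ 2"
    using next_lev_spec[OF assms(1), where s="c (Suc 0)" and key=key] assms(2) assms(3)[of 0] by simp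
  then show ?case using assms by simp
next
  case (Suc i)
  let ?L = "levs key c V (Suc i)"
  have fin: "finite ?L" using Suc.IH finite_subset by blast
  have cL: "card ?L = c (Suc i)" using Suc.IH next_lev_spec[where A="levs key c V i" and s="c (Suc i)" and key=key] assms(3)
    by simp
  have sp: "next_lev key (c (Suc (Suc i))) ?L \<subseteq> ?L \<and> card (next_lev key (c (Suc (Suc i))) ?L) = c (Suc (Suc i)) \<and>
    real (Suc (c (Suc (Suc i)))) * real (cost key ?L (next_lev key (c (Suc (Suc i))) ?L)) \<le> real (card ?L) ^ 2"
    using next_lev_spec[OF fin, where s="c (Suc (Suc i))" and key=key] cL assms(3)[of "Suc i"] by simp
  show ?case using fin cL sp Suc.IH by auto
qed

lemma arg_min_props:
  fixes f :: "nat \<Rightarrow> ereal"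
  assumes "finite S" "S \<noteq> {}"
  shows "arg_min_on f S \<in> S \<and> (\<forall>z\<in>S. f (arg_min_on f S) \<le> f z)"
  using arg_min_if_finite[OF assms, of f] by (auto simp: not_less)

lemma hs_inst:
  fixes V :: "nat set" and E w k A piv Hb Hp wH
  assumes finV: "finite V" and EV: "E \<subseteq> edges_on V" and wpos: "\<forall>e\<in>E. w e > 0"
    and A0: "A 0 = V" and AV: "\<And>i. A i \<subseteq> V" and Ane: "\<And>i. i < k \<Longrightarrow> A i \<noteq> {}"
    and Ak: "A k = {}"
  assumes piv_def: "piv = (\<lambda>j u. arg_min_on (graph_dist E w u) (A j))"
    and Hb_def: "Hb = {{x,y} | x y. \<exists>i<k. x \<in> A i \<and>
        y \<in> set (takeWhile (\<lambda>z. z \<notin> A (Suc i)) (sig (graph_dist E w x) (A i))) \<and>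
        x \<noteq> y \<and> graph_dist E w x y < \<infinity>}"
    and Hp_def: "Hp = {{u, piv j u} | u j. u \<in> V \<and> j < k \<and> u \<noteq> piv j u \<and> graph_dist E w u (piv j u) < \<infinity>}"
    and wH_def: "wH = (\<lambda>e. real_of_ereal (graph_dist E w (Min e) (Max e)))"
  shows "hs V E w (Hb \<union> Hp) wH k A piv"
proof -
  let ?d = "graph_dist E w"
  have finA: "finite (A i)" for i using AV finV finite_subset by blast
  have wnn: "\<forall>e\<in>E. w e \<ge> 0" using wpos by (simp add: less_imp_le)
  have dnn: "?d x y \<ge> 0" for x y using dist_nonneg[OF wnn] .
  have pv: "piv j u \<in> A j \<and> (\<forall>z\<in>A j. ?d u (piv j u) \<le> ?d u z)" if "j < k" for j u
    unfolding piv_def using arg_min_props[OF finA Ane[OF that]] by blast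
  have dsym: "?d x y = ?d y x" for x y by (rule dist_sym)
  have memH: "\<exists>x' y'. {x,y} = {x',y'} \<and> ?d x' y' < \<infinity> \<and> x' \<in> V \<and> y' \<in> V \<and> x' \<noteq> y'"
    if "{x,y} \<in> Hb \<union> Hp" for x y
  proof -
    from that show ?thesis
    proof
      assume "{x,y} \<in> Hb"
      then have "\<exists>x' y'. {x,y} = {x',y'} \<and> (\<exists>i<k. x' \<in> A i \<and>
        y' \<in> set (takeWhile (\<lambda>z. z \<notin> A (Suc i)) (sig (graph_dist E w x') (A i))) \<and>
        x' \<noteq> y' \<and> ?d x' y' < \<infinity>)" unfolding Hb_def by (simp only: mem_Collect_eq)
      then obtain x' y' i where h: "{x,y} = {x',y'}" "i < k" "x' \<in> A i"
        "y' \<in> set (takeWhile (\<lambda>z. z \<notin> A (Suc i)) (sig (graph_dist E w x') (A i)))"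
        "x' \<noteq> y'" "?d x' y' < \<infinity>" by (elim exE conjE)
      have "y' \<in> set (sig (graph_dist E w x') (A i))" using set_takeWhileD[OF h(4)] by simp
      then have "y' \<in> A i" using sig_props[OF finA, of "graph_dist E w x'" i] by simp
      then have "x' \<in> V" "y' \<in> V" using AV[of i] h(3) by auto
      then show ?thesis using h by blast
    next
      assume "{x,y} \<in> Hp"
      then have "\<exists>u j. {x,y} = {u, piv j u} \<and> u \<in> V \<and> j < k \<and> u \<noteq> piv j u \<and> ?d u (piv j u) < \<infinity>"
        unfolding Hp_def by (simp only: mem_Collect_eq)
      then obtain u j where h: "{x,y} = {u, piv j u}" "u \<in> V" "j < k" "u \<noteq> piv j u" "?d u (piv j u) < \<infinity>"
        by (elim exE conjE)
      have "piv j u \<in> A j" using pv[OF h(3)] by simp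
      then have "piv j u \<in> V" using AV[of j] by auto
      then show ?thesis using h by blast
    qed
  qed
  have dxy_eq: "?d x y = ?d x' y'" if "{x,y} = {x',y'}" for x y x' y'
  proof -
    have "(x = x' \<and> y = y') \<or> (x = y' \<and> y = x')" using that by (simp add: doubleton_eq_iff)
    then show ?thesis
    proof
      assume "x = y' \<and> y = x'" then show ?thesis using dsym[of x y] by simp
    qed simp
  qed
  show ?thesis
  proof (unfold_locales)
    show "E \<subseteq> edges_on V" by (rule EV)
    show "\<forall>e\<in>E. 0 < w e" by (rule wpos)
    show "Hb \<union> Hp \<subseteq> edges_on V"
    proof
      fix e assume e: "e \<in> Hb \<union> Hp"
      then have "\<exists>x y. e = {x,y}"
      proof
        assume "e \<in> Hb" then show ?thesis unfolding Hb_def mem_Collect_eq by blast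
      next
        assume "e \<in> Hp" then show ?thesis unfolding Hp_def mem_Collect_eq by blast
      qed
      then obtain x y where "e = {x,y}" by blast
      then obtain x' y' where "e = {x',y'}" "x' \<in> V" "y' \<in> V" "x' \<noteq> y'"
        using memH e by blast
      then show "e \<in> edges_on V" unfolding edges_on_def mem_Collect_eq by blast
    qed
    show "?d x y < \<infinity> \<and> ereal (wH {x, y}) = ?d x y" if xyH: "{x, y} \<in> Hb \<union> Hp" for x y
    proof -
      obtain x' y' where xy: "{x,y} = {x',y'}" "?d x' y' < \<infinity>" using memH[OF xyH] by blast
      have fin: "?d x y < \<infinity>" using xy dxy_eq[OF xy(1)] by simp
      have "?d (Min {x,y}) (Max {x,y}) = ?d x y"
      proof (cases "x \<le> y")
        case True then show ?thesis by (simp add: max_def min_def)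
      next
        case False then show ?thesis using dsym[of y x] by (simp add: max_def min_def)
      qed
      then have "ereal (wH {x,y}) = ereal (real_of_ereal (?d x y))" unfolding wH_def by simp
      also have "\<dots> = ?d x y" using fin dnn[of x y] by (simp add: ereal_real)
      finally show ?thesis using fin by simp
    qed
    show "piv j u \<in> A j" if "j < k" for j u using pv[OF that] by blast
    show "?d u (piv j u) \<le> ?d u z" if "j < k" "z \<in> A j" for j u z using pv[OF that(1)] that(2) by blast
    show "u = piv j u \<or> {u, piv j u} \<in> Hb \<union> Hp \<or> ?d u (piv j u) = \<infinity>" if "u \<in> V" "j < k" for u j
    proof (cases "u = piv j u \<or> ?d u (piv j u) = \<infinity>")
      case True then show ?thesis by blast
    next
      case False
      then have "?d u (piv j u) < \<infinity>" "u \<noteq> piv j u" by (auto simp: less_top[symmetric])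
      then have "{u, piv j u} \<in> Hp" unfolding Hp_def mem_Collect_eq using that by blast
      then show ?thesis by blast
    qed
    show "x = y \<or> {x, y} \<in> Hb \<union> Hp \<or> (i + 1 < k \<and> ?d x (piv (i + 1) x) \<le> ?d x y)"
      if i: "i < k" "x \<in> A i" "y \<in> A i" "?d x y < \<infinity>" for i x y
    proof (cases "x = y \<or> y \<in> set (takeWhile (\<lambda>z. z \<notin> A (Suc i)) (sig (graph_dist E w x) (A i)))")
      case True
      then show ?thesis
      proof
        assume "y \<in> set (takeWhile (\<lambda>z. z \<notin> A (Suc i)) (sig (graph_dist E w x) (A i)))"
        then have "{x,y} \<in> Hb" if "x \<noteq> y" unfolding Hb_def mem_Collect_eq using i that by blast
        then show ?thesis by blast
      qed simp
    next
      case False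
      have sp: "sorted (map (?d x) (sig (?d x) (A i)))" "set (sig (?d x) (A i)) = A i"
        using sig_props[OF finA] by blast+
      obtain z where z: "z \<in> A i" "z \<in> A (Suc i)" "?d x z \<le> ?d x y"
        using tw_sorted[OF sp(1), of y "\<lambda>z. z \<notin> A (Suc i)"] sp(2) i False by auto
      have sk: "Suc i < k" using z(2) Ak i(1) by (cases "Suc i = k") auto
      have "?d x (piv (Suc i) x) \<le> ?d x z" using pv[OF sk] z(2) by blast
      then show ?thesis using sk z(3) by (simp add: order.trans)
    qed
    show "A 0 = V" by (rule A0)
  qed
qed



lemma ceil_le2: fixes x :: real assumes "x \<ge> 1" shows "real (nat \<lceil>x\<rceil>) \<le> 2 * x"
proof -
  have "real_of_int \<lceil>x\<rceil> < x + 1" by linarith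
  moreover have "real (nat \<lceil>x\<rceil>) = real_of_int \<lceil>x\<rceil>" using assms by simp
  ultimately show ?thesis using assms by linarith
qed

lemma ceil_ge: fixes x :: real shows "real (nat \<lceil>x\<rceil>) \<ge> x"
  by linarith

lemma numeric:
  fixes n k :: nat and a :: "nat \<Rightarrow> real" and c :: "nat \<Rightarrow> nat"
  assumes n1: "n \<ge> 1" and k1: "k \<ge> 1"
    and a_def: "a = (\<lambda>i. 1 - (2^i - 1) / (2^k - 1))"
    and c_def: "c = (\<lambda>i. nat \<lceil>real n powr a i\<rceil>)"
  shows "c 0 = n" "c (Suc i) \<le> c i" "i < k \<Longrightarrow> c i \<ge> 1"
    "Suc i < k \<Longrightarrow> real (c i) ^ 2 \<le> 4 * real n powr (1 + 1 / (2^k - 1)) * real (Suc (c (Suc i)))"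
    "real (c (k - 1)) ^ 2 \<le> 4 * real n powr (1 + 1 / (2^k - 1))"
proof -
  define M :: real where "M = 2^k - 1"
  have "(2::real)^1 \<le> 2^k" by (rule power_increasing) (use k1 in auto)
  then have M1: "M \<ge> 1" unfolding M_def by simp
  have rn: "real n \<ge> 1" using n1 by simp
  have aM: "a i = 1 - (2^i - 1) / M" for i unfolding a_def M_def by simp
  show "c 0 = n" unfolding c_def a_def using rn by simp
  have amono: "a (Suc i) \<le> a i" for i unfolding aM using M1 by (simp add: divide_right_mono)
  show "c (Suc i) \<le> c i" unfolding c_def using amono[of i] rn
    by (intro nat_mono ceiling_mono powr_mono) auto
  have anonneg: "a i \<ge> 0" if "i \<le> k" for i
  proof -
    have "(2::real)^i \<le> 2^k" using that by (intro power_increasing) auto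
    then have "(2^i - 1) / M \<le> 1" unfolding M_def using M1 M_def by (simp add: divide_le_eq)
    then show ?thesis unfolding aM by simp
  qed
  have pge1: "real n powr a i \<ge> 1" if "i \<le> k" for i using anonneg[OF that] rn
    by (simp add: ge_one_powr_ge_zero)
  show "i < k \<Longrightarrow> c i \<ge> 1"
  proof -
    assume "i < k"
    then have "real n powr a i \<ge> 1" using pge1 by simp
    then have "real (c i) \<ge> 1" unfolding c_def using ceil_ge order.trans by blast
    then show "c i \<ge> 1" by simp
  qed
  have csq: "real (c i) ^ 2 \<le> 4 * real n powr (2 * a i)" if "i \<le> k" for i
  proof -
    have "real (c i) \<le> 2 * real n powr a i" unfolding c_def using ceil_le2 pge1[OF that] by blast
    then have h1: "real (c i) ^ 2 \<le> (2 * real n powr a i) ^ 2" by (intro power_mono) auto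
    have h2: "(2 * real n powr a i) ^ 2 = 4 * (real n powr a i * real n powr a i)" by (simp add: power2_eq_square)
    have h3: "real n powr a i * real n powr a i = real n powr (2 * a i)"
      using powr_add[of "real n" "a i" "a i"] by (simp only: mult_2)
    show ?thesis using h1 h2 h3 by simp
  qed
  have pdef: "1 + 1 / (2^k - 1) = 1 + 1 / M" unfolding M_def by simp
  show "Suc i < k \<Longrightarrow> real (c i) ^ 2 \<le> 4 * real n powr (1 + 1 / (2^k - 1)) * real (Suc (c (Suc i)))"
  proof -
    assume si: "Suc i < k"
    have ex: "2 * a i = (1 + 1 / M) + a (Suc i)" unfolding aM using M1 by (simp add: field_simps)
    have "real (c i) ^ 2 \<le> 4 * real n powr (2 * a i)" using csq si by simp
    also have "\<dots> = 4 * real n powr (1 + 1 / M) * real n powr a (Suc i)"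
      using rn by (simp add: ex powr_add)
    also have "\<dots> \<le> 4 * real n powr (1 + 1 / M) * real (Suc (c (Suc i)))"
    proof -
      have "real n powr a (Suc i) \<le> real (c (Suc i))" unfolding c_def by (rule ceil_ge)
      then show ?thesis by (intro mult_left_mono) auto
    qed
    finally show ?thesis using pdef by simp
  qed
  show "real (c (k - 1)) ^ 2 \<le> 4 * real n powr (1 + 1 / (2^k - 1))"
  proof -
    have ex: "2 * a (k - 1) = 1 + 1 / M"
    proof -
      have "(2::real) ^ k = 2 * 2 ^ (k - 1)" using k1 by (cases k) auto
      then have "M = 2 * 2 ^ (k - 1) - 1" unfolding M_def by simp
      then show ?thesis unfolding aM using M1 by (simp add: field_simps)
    qed
    show ?thesis using csq[of "k - 1"] ex pdef by simp
  qed
qed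



lemma card_H:
  fixes V :: "nat set" and E w k A piv Hb Hp
  assumes finV: "finite V" and AV: "\<And>i. A i \<subseteq> V"
  assumes Hb_def: "Hb = {{x,y} | x y. \<exists>i<k. x \<in> A i \<and>
        y \<in> set (takeWhile (\<lambda>z. z \<notin> A (Suc i)) (sig (graph_dist E w x) (A i))) \<and>
        x \<noteq> y \<and> graph_dist E w x y < \<infinity>}"
    and Hp_def: "Hp = {{u, piv j u} | u j. u \<in> V \<and> j < k \<and> u \<noteq> piv j u \<and> graph_dist E w u (piv j u) < \<infinity>}"
  shows "card (Hb \<union> Hp) \<le> (\<Sum>i<k. \<Sum>x\<in>A i. length (takeWhile (\<lambda>z. z \<notin> A (Suc i)) (sig (graph_dist E w x) (A i))))
     + card V * k"
proof -
  let ?B = "\<lambda>i x. set (takeWhile (\<lambda>z. z \<notin> A (Suc i)) (sig (graph_dist E w x) (A i)))"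
  have finA: "finite (A i)" for i using AV finV finite_subset by blast
  have s1: "Hb \<subseteq> (\<Union>i\<in>{..<k}. \<Union>x\<in>A i. (\<lambda>y. {x,y}) ` ?B i x)"
  proof
    fix e assume "e \<in> Hb"
    then obtain x y i where "e = {x,y}" "i < k" "x \<in> A i" "y \<in> ?B i x"
      unfolding Hb_def mem_Collect_eq by blast
    then show "e \<in> (\<Union>i\<in>{..<k}. \<Union>x\<in>A i. (\<lambda>y. {x,y}) ` ?B i x)" by blast
  qed
  have fin1: "finite (\<Union>i\<in>{..<k}. \<Union>x\<in>A i. (\<lambda>y. {x,y}) ` ?B i x)" using finA by auto
  have "card Hb \<le> card (\<Union>i\<in>{..<k}. \<Union>x\<in>A i. (\<lambda>y. {x,y}) ` ?B i x)" by (rule card_mono[OF fin1 s1])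
  also have "\<dots> \<le> (\<Sum>i<k. card (\<Union>x\<in>A i. (\<lambda>y. {x,y}) ` ?B i x))" by (rule card_UN_le) simp
  also have "\<dots> \<le> (\<Sum>i<k. \<Sum>x\<in>A i. card ((\<lambda>y. {x,y}) ` ?B i x))"
    by (intro sum_mono card_UN_le finA)
  also have "\<dots> \<le> (\<Sum>i<k. \<Sum>x\<in>A i. length (takeWhile (\<lambda>z. z \<notin> A (Suc i)) (sig (graph_dist E w x) (A i))))"
  proof (intro sum_mono)
    fix i x
    have "card ((\<lambda>y. {x,y}) ` ?B i x) \<le> card (?B i x)" by (rule card_image_le) simp
    also have "\<dots> \<le> length (takeWhile (\<lambda>z. z \<notin> A (Suc i)) (sig (graph_dist E w x) (A i)))"
      by (rule card_length)
    finally show "card ((\<lambda>y. {x,y}) ` ?B i x) \<le> length (takeWhile (\<lambda>z. z \<notin> A (Suc i)) (sig (graph_dist E w x) (A i)))" .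
  qed
  finally have cb: "card Hb \<le> (\<Sum>i<k. \<Sum>x\<in>A i. length (takeWhile (\<lambda>z. z \<notin> A (Suc i)) (sig (graph_dist E w x) (A i))))" .
  have s2: "Hp \<subseteq> (\<lambda>(u,j). {u, piv j u}) ` (V \<times> {..<k})"
  proof
    fix e assume "e \<in> Hp"
    then obtain u j where "e = {u, piv j u}" "u \<in> V" "j < k" unfolding Hp_def mem_Collect_eq by blast
    then show "e \<in> (\<lambda>(u,j). {u, piv j u}) ` (V \<times> {..<k})" by force
  qed
  have "card Hp \<le> card ((\<lambda>(u,j). {u, piv j u}) ` (V \<times> {..<k}))"
    by (rule card_mono[OF _ s2]) (simp add: finV)
  also have "\<dots> \<le> card (V \<times> {..<k})" by (rule card_image_le) (simp add: finV)
  also have "\<dots> = card V * k" by (simp add: card_cartesian_product)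
  finally have cp: "card Hp \<le> card V * k" .
  have "card (Hb \<union> Hp) \<le> card Hb + card Hp" by (rule card_Un_le)
  then show ?thesis using cb cp by linarith
qed



lemma construct:
  fixes V :: "nat set" and E w and k :: nat
  assumes finV: "finite V" and Vne: "V \<noteq> {}" and EV: "E \<subseteq> edges_on V" and wpos: "\<forall>e\<in>E. w e > 0"
    and k1: "k \<ge> 1"
  shows "\<exists>H wH. real (card H) \<le> 33 * real k * real (card V) powr (1 + 1 / (2 ^ k - 1)) \<and>
        (\<forall>\<epsilon>::real. 0 < \<epsilon> \<and> \<epsilon> < 1 \<longrightarrow>
           is_hopset V E w H wH ((33 * real k / \<epsilon>) ^ (k - 1)) \<epsilon>)"
proof -
  define n where "n = card V"
  have n1: "n \<ge> 1" unfolding n_def using finV Vne by (simp add: Suc_le_eq card_gt_0_iff)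
  define p :: real where "p = 1 + 1 / (2 ^ k - 1)"
  define a where "a = (\<lambda>i::nat. 1 - (2^i - 1) / (2^k - 1 :: real))"
  define c where "c = (\<lambda>i. nat \<lceil>real n powr a i\<rceil>)"
  note num = numeric[OF n1 k1 a_def c_def]
  define key where "key = graph_dist E w"
  define L where "L = levs key c V"
  have Lp: "finite (L i) \<and> card (L i) = c i \<and> L i \<subseteq> V \<and> L (Suc i) \<subseteq> L i \<and>
    real (Suc (c (Suc i))) * real (cost key (L i) (L (Suc i))) \<le> real (c i) ^ 2" for i
    unfolding L_def using levs_props[OF finV, of c key i] num(1,2) n_def by simp
  define A where "A = (\<lambda>i. if i < k then L i else {})"
  have A0: "A 0 = V" unfolding A_def L_def using k1 by simp
  have AV: "A i \<subseteq> V" for i unfolding A_def using Lp by auto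
  have Ane: "A i \<noteq> {}" if "i < k" for i
  proof -
    have "card (A i) = c i" unfolding A_def using that Lp by simp
    then show ?thesis using num(3)[OF that] by auto
  qed
  have Ak: "A k = {}" unfolding A_def by simp
  define piv where "piv = (\<lambda>j u. arg_min_on (graph_dist E w u) (A j))"
  define Hb where "Hb = {{x,y} | x y. \<exists>i<k. x \<in> A i \<and>
        y \<in> set (takeWhile (\<lambda>z. z \<notin> A (Suc i)) (sig (graph_dist E w x) (A i))) \<and>
        x \<noteq> y \<and> graph_dist E w x y < \<infinity>}"
  define Hp where "Hp = {{u, piv j u} | u j. u \<in> V \<and> j < k \<and> u \<noteq> piv j u \<and> graph_dist E w u (piv j u) < \<infinity>}"
  define wH where "wH = (\<lambda>e. real_of_ereal (graph_dist E w (Min e) (Max e)))"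
  have HS: "hs V E w (Hb \<union> Hp) wH k A piv"
    by (rule hs_inst[OF finV EV wpos A0 AV Ane Ak piv_def Hb_def Hp_def wH_def])
  have lev: "real (\<Sum>x\<in>A i. length (takeWhile (\<lambda>z. z \<notin> A (Suc i)) (sig (graph_dist E w x) (A i))))
      \<le> 4 * real n powr p" if ik: "i < k" for i
  proof (cases "Suc i < k")
    case True
    have eq: "(\<Sum>x\<in>A i. length (takeWhile (\<lambda>z. z \<notin> A (Suc i)) (sig (graph_dist E w x) (A i))))
        = cost key (L i) (L (Suc i))" unfolding A_def cost_def key_def using True ik by simp
    have pos: "real (Suc (c (Suc i))) > 0" by simp
    have "real (Suc (c (Suc i))) * real (cost key (L i) (L (Suc i))) \<le> 4 * real n powr p * real (Suc (c (Suc i)))"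
      using Lp[of i] num(4)[OF True] p_def by (meson order.trans)
    then have "real (cost key (L i) (L (Suc i))) \<le> 4 * real n powr p" using pos
      by (simp add: mult.commute mult_le_cancel_left_pos)
    then show ?thesis using eq by simp
  next
    case False
    then have ik1: "i = k - 1" "A (Suc i) = {}" using ik unfolding A_def by auto
    have fin: "finite (A i)" using AV finV finite_subset by blast
    have "(\<Sum>x\<in>A i. length (takeWhile (\<lambda>z. z \<notin> A (Suc i)) (sig (graph_dist E w x) (A i))))
        = (\<Sum>x\<in>A i. card (A i))"
    proof (rule sum.cong[OF refl])
      fix x assume "x \<in> A i"
      have "length (sig (graph_dist E w x) (A i)) = card (A i)"
        using sig_props[OF fin, of "graph_dist E w x"] distinct_card by metis
      moreover have tw: "takeWhile (\<lambda>z. z \<notin> A (Suc i)) xs = xs" for xs :: "nat list"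
        using ik1(2) by (induct xs) auto
      ultimately show "length (takeWhile (\<lambda>z. z \<notin> A (Suc i)) (sig (graph_dist E w x) (A i))) = card (A i)"
        by (simp only: tw)
    qed
    also have "\<dots> = card (A i) * card (A i)" by simp
    also have "card (A i) = c (k - 1)" using ik ik1(1) Lp unfolding A_def by simp
    finally have "real (\<Sum>x\<in>A i. length (takeWhile (\<lambda>z. z \<notin> A (Suc i)) (sig (graph_dist E w x) (A i))))
        = real (c (k - 1)) ^ 2" by (simp add: power2_eq_square)
    then show ?thesis using num(5) p_def by simp
  qed
  have np: "real n \<le> real n powr p"
  proof -
    have "p \<ge> 1" unfolding p_def using k1 by (simp add: one_le_power)
    then have "real n powr 1 \<le> real n powr p" using n1 by (intro powr_mono) auto
    then show ?thesis using n1 by simp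
  qed
  have "real (card (Hb \<union> Hp)) \<le> real ((\<Sum>i<k. \<Sum>x\<in>A i. length (takeWhile (\<lambda>z. z \<notin> A (Suc i)) (sig (graph_dist E w x) (A i)))) + card V * k)"
    using card_H[OF finV AV Hb_def Hp_def] by (simp only: of_nat_le_iff)
  also have "\<dots> = (\<Sum>i<k. real (\<Sum>x\<in>A i. length (takeWhile (\<lambda>z. z \<notin> A (Suc i)) (sig (graph_dist E w x) (A i))))) + real n * real k"
    unfolding n_def by simp
  also have "\<dots> \<le> (\<Sum>i<k. 4 * real n powr p) + real n powr p * real k"
    using lev np by (intro add_mono sum_mono mult_right_mono) auto
  also have "\<dots> = 5 * real k * real n powr p" by simp
  also have "\<dots> \<le> 33 * real k * real n powr p" by (intro mult_right_mono) auto
  finally have card: "real (card (Hb \<union> Hp)) \<le> 33 * real k * real (card V) powr (1 + 1 / (2 ^ k - 1))"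
    unfolding n_def p_def .
  have hop: "is_hopset V E w (Hb \<union> Hp) wH ((33 * real k / \<epsilon>) ^ (k - 1)) \<epsilon>" if "0 < \<epsilon>" "\<epsilon> < 1" for \<epsilon> :: real
  proof -
    have "24 * real k / \<epsilon> + 9 \<le> 33 * real k / \<epsilon>"
    proof -
      have "9 \<le> 9 * real k / \<epsilon>" using that k1 by (simp add: field_simps)
      moreover have "33 * real k / \<epsilon> = 24 * real k / \<epsilon> + 9 * real k / \<epsilon>"
        by (simp add: add_divide_distrib[symmetric])
      ultimately show ?thesis by linarith
    qed
    then have bnd: "(real (24 * k) / \<epsilon> + 9) ^ (k - 1) \<le> (33 * real k / \<epsilon>) ^ (k - 1)"
      using that by (intro power_mono) auto
    show ?thesis using hs.hopset[OF HS that k1 bnd] .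
  qed
  show ?thesis using card hop by blast
qed

theorem mainTheorem2:
  shows "\<exists>C > (0::real). \<forall>(V :: nat set) E w (k :: nat).
     finite V \<and> E \<subseteq> edges_on V \<and> (\<forall>e\<in>E. w e > 0) \<and> k \<ge> 1 \<longrightarrow>
     (\<exists>H wH. real (card H) \<le> C * real k * real (card V) powr (1 + 1 / (2 ^ k - 1)) \<and>
        (\<forall>\<epsilon>::real. 0 < \<epsilon> \<and> \<epsilon> < 1 \<longrightarrow>
           is_hopset V E w H wH ((C * real k / \<epsilon>) ^ (k - 1)) \<epsilon>))"
proof (intro exI[of _ 33] conjI allI impI)
  fix V :: "nat set" and E :: "nat set set" and w :: "nat set \<Rightarrow> real" and k :: nat
  assume h: "finite V \<and> E \<subseteq> edges_on V \<and> (\<forall>e\<in>E. w e > 0) \<and> k \<ge> 1"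
  show "\<exists>H wH. real (card H) \<le> 33 * real k * real (card V) powr (1 + 1 / (2 ^ k - 1)) \<and>
        (\<forall>\<epsilon>::real. 0 < \<epsilon> \<and> \<epsilon> < 1 \<longrightarrow>
           is_hopset V E w H wH ((33 * real k / \<epsilon>) ^ (k - 1)) \<epsilon>)"
  proof (cases "V = {}")
    case True
    have "is_hopset V E w {} (\<lambda>e. 0) \<beta> \<epsilon>" for \<beta> \<epsilon> unfolding is_hopset_def using True by simp
    then show ?thesis by (intro exI[of _ "{}"] exI[of _ "\<lambda>e. 0"]) simp
  next
    case False
    then show ?thesis using construct h by blast
  qed
qed simp



end
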